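(* With the setting below, let $k:\mathbb R^d\times\mathbb R^c\times\mathbb R^c\to\operatorname{Hom}(\mathbb R^c,\mathbb R^{c'})$ satisfy the steerability constraint $k(hy,\rho(h)u,\rho(h)v)=\sigma(h)k(y,u,v)\rho(h)^{-1}$ for all $h\in H$, $y\in\mathbb R^d$, $u,v\in\mathbb R^c$, and let $[\Psi_kf](x)=\int_{\mathbb R^d}k(x'-x,f(x),f(x'))f(x')\,\mathrm{d}x'$ for $f:\mathbb R^d\to\mathbb R^c$. Define $\kappa:G\times\mathbb R^c\times\mathbb R^c\to\operatorname{Hom}(\mathbb R^c,\mathbb R^{c'})$ by $\kappa(g,u,v)=k(\pi(g),u,\rho(\mathrm h(g))v)\rho(\mathrm h(g))$ and $\hat\omega(g^{-1}F,g'):=\kappa\big(g',[g^{-1}F](e),[g^{-1}F](g')\big)[g^{-1}F](g')$. Then for all $F\in\mathcal I_\rho$ and $g\in G$, $$\int_G\hat\omega(g^{-1}F,g')\,\mathrm{d}g'=[(\Lambda^\uparrow\circ\Psi_k\circ\Lambda^\downarrow)F](g),$$ i.e. the lifted implicit steerable convolution is an operator of the form $F\mapsto\int_G\hat\omega(g^{-1}F,g')\,\mathrm{d}g'$.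
   Context: $G=\mathbb R^d\rtimes H$ with $H\le O(d)$ closed, elements $(x,h)$, product $(x,h)(x',h')=(x+hx',hh')$, Haar measure $\mathrm{d}x\,\mathrm{d}h$ with Lebesgue $\mathrm{d}x$ and normalised Haar measure $\mathrm{d}h$ on $H$; $\pi(x,h)=x$, $\mathrm h(x,h)=h$, $s(x)=(x,e)$. $(\rho,\mathbb R^c)$, $(\sigma,\mathbb R^{c'})$ are representations of $H$; the feature vectors in $\mathbb R^c$ contain both node features and regular features. $\mathcal I_\rho$ is the induced representation: functions $F:G\to\mathbb R^c$ with $F(gh)=\rho(h^{-1})F(g)$, with action $(kF)(g)=F(k^{-1}g)$, so $[g^{-1}F](g')=F(gg')$. The lift and sink maps are $[\Lambda^\uparrow f](g)=\sigma(\mathrm h(g)^{-1})f(\pi(g))$ for $\mathbb R^{c'}$-valued $f$ and $[\Lambda^\downarrow F](x)=F(s(x))$. Integrals are assumed to exist. *)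

theory Defs
  imports "HOL-Analysis.Analysis"
begin

type_synonym ('d) Gelem = "(real^'d) \<times> (real^'d^'d)"

definition Gmul :: "'d::finite Gelem \<Rightarrow> 'd Gelem \<Rightarrow> 'd Gelem" where
  "Gmul g g' = (fst g + (snd g *v fst g'), snd g ** snd g')"

definition Gunit :: "'d::finite Gelem" where
  "Gunit = (0, mat 1)"

definition piG :: "'d::finite Gelem \<Rightarrow> real^'d" where
  "piG g = fst g"

definition hG :: "'d::finite Gelem \<Rightarrow> real^'d^'d" where
  "hG g = snd g"

definition sG :: "real^'d::finite \<Rightarrow> 'd Gelem" where
  "sG x = (x, mat 1)"

definition closed_orth_subgroup :: "(real^'d::finite^'d) set \<Rightarrow> bool" where
  "closed_orth_subgroup H \<longleftrightarrow>
     H \<subseteq> {h. orthogonal_matrix h} \<and> closed H \<and> mat 1 \<in> H \<and>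
     (\<forall>h\<in>H. \<forall>h'\<in>H. h ** h' \<in> H) \<and> (\<forall>h\<in>H. matrix_inv h \<in> H)"

definition normalised_haar :: "(real^'d::finite^'d) set \<Rightarrow> (real^'d^'d) measure \<Rightarrow> bool" where
  "normalised_haar H \<mu> \<longleftrightarrow>
     sets \<mu> = sets (restrict_space borel H) \<and> emeasure \<mu> H = 1 \<and>
     (\<forall>h\<in>H. \<forall>A\<in>sets \<mu>. emeasure \<mu> ((\<lambda>h'. h ** h') -` A \<inter> H) = emeasure \<mu> A)"

definition is_rep :: "(real^'d::finite^'d) set \<Rightarrow> (real^'d^'d \<Rightarrow> real^'n::finite^'n) \<Rightarrow> bool" where
  "is_rep H \<rho> \<longleftrightarrow> continuous_on H \<rho> \<and> \<rho> (mat 1) = mat 1 \<and>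
     (\<forall>h\<in>H. \<forall>h'\<in>H. \<rho> (h ** h') = \<rho> h ** \<rho> h')"

definition in_induced :: "(real^'d::finite^'d) set \<Rightarrow> (real^'d^'d \<Rightarrow> real^'c::finite^'c)
    \<Rightarrow> ('d Gelem \<Rightarrow> real^'c) \<Rightarrow> bool" where
  "in_induced H \<rho> F \<longleftrightarrow>
     (\<forall>x h h'. h \<in> H \<longrightarrow> h' \<in> H \<longrightarrow>
        F (Gmul (x, h) (0, h')) = \<rho> (matrix_inv h') *v F (x, h))"

definition haarG :: "(real^'d::finite^'d) measure \<Rightarrow> 'd Gelem measure" where
  "haarG \<mu> = lborel \<Otimes>\<^sub>M \<mu>"

text \<open>Action: [g^-1 F](g') = F(g g').\<close>
definition act_inv :: "'d::finite Gelem \<Rightarrow> ('d Gelem \<Rightarrow> 'b) \<Rightarrow> 'd Gelem \<Rightarrow> 'b" where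
  "act_inv g F g' = F (Gmul g g')"

definition lift :: "(real^'d::finite^'d \<Rightarrow> real^'c'::finite^'c') \<Rightarrow> (real^'d \<Rightarrow> real^'c')
    \<Rightarrow> 'd Gelem \<Rightarrow> real^'c'" where
  "lift \<sigma> f g = \<sigma> (matrix_inv (hG g)) *v f (piG g)"

definition sink :: "('d::finite Gelem \<Rightarrow> 'b) \<Rightarrow> real^'d \<Rightarrow> 'b" where
  "sink F x = F (sG x)"

definition Psi :: "(real^'d::finite \<Rightarrow> real^'c::finite \<Rightarrow> real^'c \<Rightarrow> real^'c^'c'::finite)
    \<Rightarrow> (real^'d \<Rightarrow> real^'c) \<Rightarrow> real^'d \<Rightarrow> real^'c'" where
  "Psi k f x = (\<integral>x'. (k (x' - x) (f x) (f x') *v f x') \<partial>lborel)"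

definition kappa :: "(real^'d^'d \<Rightarrow> real^'c::finite^'c)
    \<Rightarrow> (real^'d::finite \<Rightarrow> real^'c \<Rightarrow> real^'c \<Rightarrow> real^'c^'c'::finite)
    \<Rightarrow> 'd Gelem \<Rightarrow> real^'c \<Rightarrow> real^'c \<Rightarrow> real^'c^'c'" where
  "kappa \<rho> k g u v = k (piG g) u (\<rho> (hG g) *v v) ** \<rho> (hG g)"

definition omega_hat :: "(real^'d^'d \<Rightarrow> real^'c::finite^'c)
    \<Rightarrow> (real^'d::finite \<Rightarrow> real^'c \<Rightarrow> real^'c \<Rightarrow> real^'c^'c'::finite)
    \<Rightarrow> ('d Gelem \<Rightarrow> real^'c) \<Rightarrow> 'd Gelem \<Rightarrow> real^'c'" where
  "omega_hat \<rho> k F' g' = kappa \<rho> k g' (F' Gunit) (F' g') *v F' g'"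

end

theory Submission
  imports Defs
begin

lemma lin_borel:
  fixes f :: "'a::euclidean_space \<Rightarrow> 'b::euclidean_space"
  shows "linear f \<Longrightarrow> f \<in> borel_measurable borel"
  by (intro borel_measurable_continuous_onI linear_continuous_on) (simp add: linear_conv_bounded_linear)

lemma distr_orth_wo:
  fixes T :: "real^'n::{finite,wellorder} \<Rightarrow> real^'n::_"
  assumes T: "orthogonal_transformation T"
  shows "distr lborel borel T = lborel"
proof (rule lborel_eqI[symmetric])
  show "sets (distr lborel borel T) = sets borel" by simp
  fix l u :: "real^'n::_" assume lu: "\<And>b. b \<in> Basis \<Longrightarrow> l \<bullet> b \<le> u \<bullet> b"
  have linT: "linear T" using T by (simp add: orthogonal_transformation_linear)
  have mT: "T \<in> borel_measurable borel" using lin_borel[OF linT] .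
  have bij: "bij T" using T orthogonal_transformation_bij by blast
  have Ti: "orthogonal_transformation (inv T)" using T orthogonal_transformation_inv by blast
  have pre: "T -` box l u = inv T ` box l u"
    using bij by (simp add: bij_vimage_eq_inv_image)
  have opn: "open (T -` box l u)"
    by (intro continuous_open_vimage open_box linear_continuous_at) (simp add: linear_conv_bounded_linear[symmetric] linT)
  have "emeasure (distr lborel borel T) (box l u) = emeasure lborel (T -` box l u)"
    using mT by (subst emeasure_distr) auto
  also have "\<dots> = emeasure lebesgue (T -` box l u)"
    using opn by (simp add: emeasure_completion)
  also have "\<dots> = ennreal (measure lebesgue (inv T ` box l u))"
    unfolding pre using measurable_orthogonal_image[OF Ti, of "box l u"]
    by (simp add: emeasure_eq_measure2)
  also have "\<dots> = ennreal (measure lebesgue (box l u))"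
    using measure_orthogonal_image[OF Ti, of "box l u"] by simp
  also have "\<dots> = emeasure lebesgue (box l u)"
    by (simp add: emeasure_eq_measure2)
  also have "\<dots> = emeasure lborel (box l u)"
    by (simp add: emeasure_completion)
  also have "\<dots> = (\<Prod>b\<in>Basis. (u - l) \<bullet> b)"
    using lu by simp
  finally show "emeasure (distr lborel borel T) (box l u) = (\<Prod>b\<in>Basis. (u - l) \<bullet> b)" .
qed

lemma Basis_cart_img: "(Basis :: (real^'n::finite) set) = (\<lambda>i. axis i 1) ` UNIV"
  by (auto simp: Basis_vec_def)

lemma prod_Basis_cart: "(\<Prod>b\<in>(Basis :: (real^'n::finite) set). x \<bullet> b) = (\<Prod>i\<in>UNIV. x $ i)"
proof -
  have "inj (\<lambda>i::'n. axis i (1::real))" by (auto simp: inj_def axis_eq_axis)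
  then show ?thesis unfolding Basis_cart_img by (simp add: prod.reindex inner_axis)
qed

lemma distr_perm:
  fixes e :: "'a::finite \<Rightarrow> 'b::finite"
  assumes e: "bij e"
  shows "distr lborel borel (\<lambda>v::real^'b. \<chi> i. v $ e i) = (lborel :: (real^'a) measure)"
proof (rule lborel_eqI[symmetric])
  show "sets (distr lborel borel (\<lambda>v::real^'b. \<chi> i. v $ e i)) = sets (borel :: (real^'a) measure)" by simp
  fix l u :: "real^'a" assume lu: "\<And>b. b \<in> Basis \<Longrightarrow> l \<bullet> b \<le> u \<bullet> b"
  have lu': "l $ i \<le> u $ i" for i using lu[of "axis i 1"] by (simp add: Basis_cart_img inner_axis)
  let ?P = "\<lambda>v::real^'b. \<chi> i. v $ e i"
  have linP: "linear ?P" by (auto simp: linear_iff vec_eq_iff)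
  have mP: "?P \<in> borel_measurable borel" using lin_borel[OF linP] .
  have ie: "e (inv e j) = j" for j using e by (meson bij_inv_eq_iff)
  have ie2: "inv e (e i) = i" for i using e by (simp add: bij_is_inj)
  let ?L = "\<chi> j. l $ inv e j" and ?U = "\<chi> j. u $ inv e j"
  have pre: "?P -` box l u = box ?L ?U"
    unfolding set_eq_iff vimage_eq by (simp add: mem_box_cart; metis ie ie2)
  have "emeasure (distr lborel borel ?P) (box l u) = emeasure lborel (?P -` box l u)"
    using mP by (subst emeasure_distr) auto
  also have "\<dots> = (\<Prod>b\<in>Basis. (?U - ?L) \<bullet> b)"
    unfolding pre by (rule emeasure_lborel_box) (auto simp: Basis_cart_img inner_axis lu')
  also have "\<dots> = (\<Prod>j\<in>UNIV. (u - l) $ inv e j)" by (simp add: prod_Basis_cart)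
  also have "\<dots> = (\<Prod>i\<in>UNIV. (u - l) $ i)"
    using prod.reindex_bij_betw[OF bij_betw_inv_into[OF e], of "\<lambda>i. (u - l) $ i"] by simp
  also have "\<dots> = (\<Prod>b\<in>Basis. (u - l) \<bullet> b)" by (simp add: prod_Basis_cart)
  finally show "emeasure (distr lborel borel ?P) (box l u) = (\<Prod>b\<in>Basis. (u - l) \<bullet> b)" .
qed

typedef 'a wo = "UNIV :: 'a set" by auto

definition enc :: "'a::finite \<Rightarrow> nat" where "enc = (SOME f. inj f)"

lemma inj_enc: "inj (enc :: 'a::finite \<Rightarrow> nat)"
  unfolding enc_def by (rule someI_ex[of "\<lambda>f::'a\<Rightarrow>nat. inj f"]) (rule ex_inj)

instantiation wo :: (finite) linorder
begin
definition less_eq_wo :: "'a wo \<Rightarrow> 'a wo \<Rightarrow> bool" where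
  "less_eq_wo x y \<longleftrightarrow> enc (Rep_wo x) \<le> enc (Rep_wo y)"
definition less_wo :: "'a wo \<Rightarrow> 'a wo \<Rightarrow> bool" where
  "less_wo x y \<longleftrightarrow> enc (Rep_wo x) < enc (Rep_wo y)"
instance
proof
  fix x y :: "'a wo"
  assume "x \<le> y" "y \<le> x"
  then have "enc (Rep_wo x) = enc (Rep_wo y)" by (simp add: less_eq_wo_def)
  then show "x = y" using inj_enc by (metis Rep_wo_inject injD)
qed (auto simp: less_eq_wo_def less_wo_def)
end

instance wo :: (finite) finite
proof
  have "(UNIV :: 'a wo set) = Abs_wo ` UNIV" by (metis Abs_wo_cases surj_def)
  then show "finite (UNIV :: 'a wo set)" by (metis finite finite_imageI)
qed

instance wo :: (finite) wellorder
proof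
  fix P :: "'a wo \<Rightarrow> bool" and a :: "'a wo"
  assume hyp: "\<And>x. (\<And>y. y < x \<Longrightarrow> P y) \<Longrightarrow> P x"
  show "P a"
  proof (induction a rule: measure_induct_rule[of "\<lambda>x. enc (Rep_wo x)"])
    case (less x)
    then show ?case using hyp by (simp add: less_wo_def)
  qed
qed

lemma orth_perm:
  fixes e :: "'a::finite \<Rightarrow> 'b::finite"
  assumes e: "bij e"
  shows "orthogonal_transformation (\<lambda>v::real^'b. (\<chi> i. v $ e i) :: real^'a)"
  unfolding orthogonal_transformation_def
proof safe
  show "linear (\<lambda>v::real^'b. (\<chi> i. v $ e i) :: real^'a)" by (auto simp: linear_iff vec_eq_iff)
  fix v w :: "real^'b"
  show "((\<chi> i. v $ e i) :: real^'a) \<bullet> (\<chi> i. w $ e i) = v \<bullet> w"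
    unfolding inner_vec_def
    using sum.reindex_bij_betw[OF e, of "\<lambda>j. v $ j \<bullet> w $ j"] by simp
qed

lemma distr_orth:
  fixes h :: "real^'d::finite^'d"
  assumes h: "orthogonal_matrix h"
  shows "distr lborel borel ((*v) h) = lborel"
proof -
  let ?P = "\<lambda>v::real^'d. (\<chi> i. v $ Rep_wo i) :: real^'d wo"
  let ?Q = "\<lambda>w::real^'d wo. (\<chi> j. w $ Abs_wo j) :: real^'d"
  have bR: "bij (Rep_wo :: 'd wo \<Rightarrow> 'd)"
    by (metis Rep_wo_inverse Abs_wo_inverse UNIV_I bij_betw_byWitness subset_UNIV)
  have bA: "bij (Abs_wo :: 'd \<Rightarrow> 'd wo)"
    by (metis Rep_wo_inverse Abs_wo_inverse UNIV_I bij_betw_byWitness subset_UNIV)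
  have oP: "orthogonal_transformation ?P" by (rule orth_perm[OF bR])
  have oQ: "orthogonal_transformation ?Q" by (rule orth_perm[OF bA])
  have oh: "orthogonal_transformation ((*v) h)"
    using h by (simp add: orthogonal_transformation_matrix)
  define T where "T = ?P \<circ> (*v) h \<circ> ?Q"
  have oT: "orthogonal_transformation T"
    unfolding T_def by (intro orthogonal_transformation_compose oP oQ oh)
  have QP: "?Q (?P x) = x" for x by (simp add: vec_eq_iff Abs_wo_inverse)
  have PQ: "?P (?Q x) = x" for x by (simp add: vec_eq_iff Rep_wo_inverse)
  have eq: "(*v) h = ?Q \<circ> (T \<circ> ?P)" by (simp add: T_def fun_eq_iff QP Abs_wo_inverse[OF UNIV_I])
  have mP: "?P \<in> lborel \<rightarrow>\<^sub>M borel" using lin_borel[OF orthogonal_transformation_linear[OF oP]] by simp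
  have mQ: "?Q \<in> borel \<rightarrow>\<^sub>M borel" using lin_borel[OF orthogonal_transformation_linear[OF oQ]] by simp
  have mT: "T \<in> borel \<rightarrow>\<^sub>M borel" using lin_borel[OF orthogonal_transformation_linear[OF oT]] by simp
  have mTP: "T \<circ> ?P \<in> lborel \<rightarrow>\<^sub>M borel" using mP mT by (rule measurable_comp)
  have "distr lborel borel ((*v) h) = distr (distr lborel borel (T \<circ> ?P)) borel ?Q"
    unfolding eq by (rule distr_distr[OF mQ mTP, symmetric])
  also have "distr lborel borel (T \<circ> ?P) = distr (distr lborel borel ?P) borel T"
    by (rule distr_distr[OF mT mP, symmetric])
  also have "distr lborel borel ?P = lborel" by (rule distr_perm[OF bR])
  also have "distr lborel borel T = lborel" by (rule distr_orth_wo[OF oT])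
  also have "distr lborel borel ?Q = lborel" by (rule distr_perm[OF bA])
  finally show ?thesis .
qed


lemma distr_affine:
  fixes h :: "real^'d::finite^'d"
  assumes h: "orthogonal_matrix h"
  shows "distr lborel borel (\<lambda>x. a + h *v x) = lborel"
proof -
  have m1: "(*v) h \<in> lborel \<rightarrow>\<^sub>M borel" using lin_borel[OF matrix_vector_mul_linear[of h]] by simp
  have m2: "(+) a \<in> borel \<rightarrow>\<^sub>M borel" by simp
  have "distr lborel borel (\<lambda>x. a + h *v x) = distr (distr lborel borel ((*v) h)) borel ((+) a)"
    using distr_distr[OF m2 m1] by (simp add: comp_def)
  also have "\<dots> = lborel" by (simp add: distr_orth[OF h] lborel_distr_plus)
  finally show ?thesis .
qed

lemma inv_unique: "A ** B = mat 1 \<Longrightarrow> B ** A = mat 1 \<Longrightarrow> matrix_inv A = (B :: 'a::comm_ring_1^'n::finite^'n)"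
proof -
  assume ab: "A ** B = mat 1" and ba: "B ** A = mat 1"
  let ?M = "matrix_inv A"
  have "A ** ?M = mat 1 \<and> ?M ** A = mat 1"
    unfolding matrix_inv_def by (rule someI[of _ B]) (simp add: ab ba)
  then have "A ** ?M = mat 1" by simp
  then have "B ** (A ** ?M) = B" by simp
  then show "?M = B" by (simp add: matrix_mul_assoc ba)
qed

lemma orth_inv: "orthogonal_matrix h \<Longrightarrow> matrix_inv h = transpose (h :: real^'n::finite^'n)"
  by (rule inv_unique) (auto simp: orthogonal_matrix_def)

theorem mainTheorem10:
  fixes H :: "(real^'d::finite^'d) set"
    and \<mu> :: "(real^'d^'d) measure"
    and \<rho> :: "real^'d^'d \<Rightarrow> real^'c::finite^'c"
    and \<sigma> :: "real^'d^'d \<Rightarrow> real^'c'::finite^'c'"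
    and k :: "real^'d \<Rightarrow> real^'c \<Rightarrow> real^'c \<Rightarrow> real^'c^'c'"
    and F :: "'d Gelem \<Rightarrow> real^'c"
    and g :: "'d Gelem"
  assumes "closed_orth_subgroup H"
    and "normalised_haar H \<mu>"
    and "is_rep H \<rho>"
    and "is_rep H \<sigma>"
    and steer: "\<And>h y u v. h \<in> H \<Longrightarrow>
       k (h *v y) (\<rho> h *v u) (\<rho> h *v v) = \<sigma> h ** k y u v ** matrix_inv (\<rho> h)"
    and "in_induced H \<rho> F"
    and "g \<in> UNIV \<times> H"
    and int_G: "integrable (haarG \<mu>) (\<lambda>g'. omega_hat \<rho> k (act_inv g F) g')"
    and int_Rd: "\<And>x. integrable lborel
       (\<lambda>x'. k (x' - x) (sink F x) (sink F x') *v sink F x')"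
  shows "(\<integral>g'. omega_hat \<rho> k (act_inv g F) g' \<partial>haarG \<mu>) = lift \<sigma> (Psi k (sink F)) g"
proof -
  note H = assms(1)[unfolded closed_orth_subgroup_def]
  have orthH: "\<And>h. h \<in> H \<Longrightarrow> orthogonal_matrix h" using H by blast
  have oneH: "mat 1 \<in> H" using H by blast
  have mulH: "\<And>h h'. h \<in> H \<Longrightarrow> h' \<in> H \<Longrightarrow> h ** h' \<in> H" using H by blast
  have trH: "transpose h \<in> H" if "h \<in> H" for h using H that orth_inv[OF orthH[OF that]] by auto
  have invH: "\<And>h. h \<in> H \<Longrightarrow> matrix_inv h = transpose h" using orthH orth_inv by blast
  note R = assms(3)[unfolded is_rep_def]
  have rho1: "\<rho> (mat 1) = mat 1" using R by blast
  have rhom: "\<And>h h'. h \<in> H \<Longrightarrow> h' \<in> H \<Longrightarrow> \<rho> (h ** h') = \<rho> h ** \<rho> h'" using R by blast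
  obtain a h0 where g: "g = (a, h0)" and h0: "h0 \<in> H" using assms(7) by auto
  define r where "r = transpose h0"
  have rH: "r \<in> H" unfolding r_def using trH h0 .
  have rh0: "r ** h0 = mat 1" "h0 ** r = mat 1" using orthH[OF h0] by (auto simp: r_def orthogonal_matrix_def)
  define f where "f = sink F"
  have Fx: "F (x, h') = \<rho> (transpose h') *v f x" if "h' \<in> H" for x h'
  proof -
    have "F (Gmul (x, mat 1) (0, h')) = \<rho> (matrix_inv h') *v F (x, mat 1)"
      using assms(6) oneH that unfolding in_induced_def by blast
    then show ?thesis by (simp add: Gmul_def f_def sink_def sG_def invH that)
  qed
  define \<psi> where "\<psi> z = k (z - a) (f a) (f z) *v f z" for z
  have invrho: "matrix_inv (\<rho> r) = \<rho> h0"
    by (rule inv_unique) (simp_all add: rhom[symmetric] rH h0 rh0 rho1)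
  have pt: "omega_hat \<rho> k (act_inv g F) (x', h') = \<sigma> r *v \<psi> (a + h0 *v x')" if h': "h' \<in> H" for x' h'
  proof -
    define z where "z = a + h0 *v x'"
    have e1: "act_inv g F Gunit = \<rho> r *v f a"
      using Fx[OF h0] by (simp add: act_inv_def g Gmul_def Gunit_def r_def)
    have hh: "h0 ** h' \<in> H" using mulH h0 h' by blast
    have e2: "act_inv g F (x', h') = \<rho> (transpose h' ** r) *v f z"
      using Fx[OF hh] by (simp add: act_inv_def g Gmul_def z_def matrix_transpose_mul r_def)
    have e3: "\<rho> h' *v act_inv g F (x', h') = \<rho> r *v f z"
    proof -
      have "\<rho> h' *v act_inv g F (x', h') = \<rho> (h' ** (transpose h' ** r)) *v f z"
        unfolding e2 matrix_vector_mul_assoc using rhom h' trH rH mulH by metis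
      also have "h' ** (transpose h' ** r) = r"
        using orthH[OF h'] unfolding orthogonal_matrix_def by (metis matrix_mul_assoc matrix_mul_lid)
      finally show ?thesis .
    qed
    have st: "k x' (\<rho> r *v f a) (\<rho> r *v f z) = \<sigma> r ** k (h0 *v x') (f a) (f z) ** \<rho> h0"
      using steer[OF rH, of "h0 *v x'" "f a" "f z"] invrho
      by (simp add: matrix_vector_mul_assoc rh0)
    have "omega_hat \<rho> k (act_inv g F) (x', h')
        = k x' (\<rho> r *v f a) (\<rho> r *v f z) *v (\<rho> r *v f z)"
      unfolding omega_hat_def kappa_def e1 piG_def hG_def
      by (simp add: e3 matrix_vector_mul_assoc[symmetric])
    also have "\<dots> = \<sigma> r *v (k (h0 *v x') (f a) (f z) *v f z)"
    proof -
      have rr: "\<rho> h0 ** \<rho> r = mat 1" using rhom[OF h0 rH] rh0 rho1 by simp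
      have "\<sigma> r ** k (h0 *v x') (f a) (f z) ** \<rho> h0 ** \<rho> r = \<sigma> r ** k (h0 *v x') (f a) (f z)"
        unfolding matrix_mul_assoc[symmetric, of _ "\<rho> h0" "\<rho> r"] rr matrix_mul_rid ..
      then show ?thesis unfolding st by (simp add: matrix_vector_mul_assoc)
    qed
    also have "\<dots> = \<sigma> r *v \<psi> z" by (simp add: \<psi>_def z_def)
    finally show ?thesis unfolding z_def .
  qed
  have spmu: "space \<mu> = H"
  proof -
    have "sets \<mu> = sets (restrict_space borel H)" using assms(2) unfolding normalised_haar_def by blast
    then have "space \<mu> = space (restrict_space borel H)" by (rule sets_eq_imp_space_eq)
    then show ?thesis by (simp add: space_restrict_space)
  qed
  define \<phi> where "\<phi> x = \<sigma> r *v \<psi> (a + h0 *v x)" for x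
  have eqG: "omega_hat \<rho> k (act_inv g F) p = \<phi> (fst p)" if "p \<in> space (haarG \<mu>)" for p
  proof -
    obtain x' h' where p: "p = (x', h')" by (cases p)
    have "h' \<in> H" using that by (simp add: p haarG_def space_pair_measure spmu)
    then show ?thesis using pt by (simp add: p \<phi>_def)
  qed
  have intpsi: "integrable lborel \<psi>" using int_Rd[of a] unfolding \<psi>_def[abs_def] f_def .
  have mpsi: "\<psi> \<in> borel_measurable borel" using borel_measurable_integrable[OF intpsi] by simp
  have mT: "(\<lambda>x. a + h0 *v x) \<in> lborel \<rightarrow>\<^sub>M borel"
    using lin_borel[OF matrix_vector_mul_linear[of h0]] by simp
  have dT: "distr lborel borel (\<lambda>x. a + h0 *v x) = lborel" by (rule distr_affine[OF orthH[OF h0]])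
  have intpsiT: "integrable lborel (\<lambda>x. \<psi> (a + h0 *v x))"
    using integrable_distr_eq[OF mT mpsi] intpsi dT by simp
  have intgT: "(\<integral>x. \<psi> (a + h0 *v x) \<partial>lborel) = (\<integral>x. \<psi> x \<partial>lborel)"
    using integral_distr[OF mT mpsi] dT by simp
  have blin: "bounded_linear ((*v) (\<sigma> r))"
    by (simp add: linear_conv_bounded_linear[symmetric])
  have intphi: "integrable lborel \<phi>"
    unfolding \<phi>_def by (rule integrable_bounded_linear[OF blin intpsiT])
  have intphi_phi: "(\<integral>x. \<phi> x \<partial>lborel) = \<sigma> r *v (\<integral>x. \<psi> x \<partial>lborel)"
    unfolding \<phi>_def intgT[symmetric] by (rule integral_bounded_linear[OF blin intpsiT])
  have fin: "finite_measure \<mu>"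
    using assms(2) spmu unfolding normalised_haar_def by (intro finite_measureI) simp
  interpret fin: finite_measure \<mu> by (rule fin)
  interpret pair_sigma_finite lborel \<mu> by unfold_locales
  have intP: "integrable (lborel \<Otimes>\<^sub>M \<mu>) (\<lambda>p. \<phi> (fst p))"
  proof -
    have "integrable (haarG \<mu>) (\<lambda>p. \<phi> (fst p)) = integrable (haarG \<mu>) (\<lambda>g'. omega_hat \<rho> k (act_inv g F) g')"
      by (rule Bochner_Integration.integrable_cong) (simp_all add: eqG)
    then show ?thesis using int_G unfolding haarG_def by simp
  qed
  have mu1: "measure \<mu> (space \<mu>) = 1"
    using assms(2) spmu unfolding normalised_haar_def by (simp add: measure_def)
  have "(\<integral>g'. omega_hat \<rho> k (act_inv g F) g' \<partial>haarG \<mu>) = (\<integral>p. \<phi> (fst p) \<partial>(lborel \<Otimes>\<^sub>M \<mu>))"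
    unfolding haarG_def[symmetric] by (rule Bochner_Integration.integral_cong) (simp_all add: eqG)
  also have "\<dots> = (\<integral>x. (\<integral>y. \<phi> x \<partial>\<mu>) \<partial>lborel)"
    using integral_fst'[OF intP] by simp
  also have "\<dots> = (\<integral>x. \<phi> x \<partial>lborel)" by (simp add: mu1)
  also have "\<dots> = lift \<sigma> (Psi k (sink F)) g"
    unfolding intphi_phi lift_def Psi_def g hG_def piG_def
    by (simp add: invH h0 r_def \<psi>_def[abs_def] f_def)
  finally show ?thesis .
qed

end
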